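(* Let $S$ be the curve obtained from $\mathbb{P}^1$ by identifying the three points $0,1,\infty$ into a single (ordinary triple) point, and let $M_O$ be the moduli space of line bundles $L$ on $S$ whose pullback to $\mathbb{P}^1$ has degree $-1$. Identify $M_O$ with $(\mathbb{C}^* )^3/\mathbb{C}^*\subset\mathbb{P}^2=\bar M_O$, where (after fixing a trivialization over the triple point and viewing the pullback $\mathcal{O}(-1)$ as the tautological bundle) the three homogeneous coordinates record the gluing data of $L$ at the points $0,1,\infty$. Then the closure $Z\subset\bar M_O$ of the locus of those $L$ for which there exists a (unique) point $x$ with $L(x)\simeq\mathcal{O}_S$ is a quadric (conic) in $\mathbb{P}^2$ passing through the three coordinate points.
   Context: Here $L(x)$ denotes $L\otimes\mathcal{O}_S(x)$ for a smooth point $x$ of $S$. The identification $M_O\cong(\mathbb{C}^* )^3/\mathbb{C}^*$: a line bundle of degree $-1$ on $S$ is $\mathcal{O}_{\mathbb{P}^1}(-1)$ together with identifications of its fibers over $0,1,\infty$ with a common line; choosing these identifications amounts to choosing one nonzero vector on each of the three tautological lines over $0,1,\infty$, up to common scaling. *)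

theory Defs
  imports "HOL-Analysis.Analysis" "HOL-Computational_Algebra.Polynomial"
begin

(* Vectors of C^2; P^1 points are lines.  Affine coordinate t <-> [t:1], infinity <-> [1:0]. *)
type_synonym vec2 = "complex \<times> complex"
type_synonym vec3 = "complex \<times> complex \<times> complex"

definition smul2 :: "complex \<Rightarrow> vec2 \<Rightarrow> vec2" where
  "smul2 m v = (m * fst v, m * snd v)"

(* chosen basis vectors of the tautological lines of O(-1) over 0, 1, infinity *)
definition taut0 :: vec2 where "taut0 = (0, 1)"
definition taut1 :: vec2 where "taut1 = (1, 1)"
definition tautinf :: vec2 where "tautinf = (1, 0)"

(* smooth points of S: points of P^1 other than 0,1,infinity, i.e. t in C - {0,1} *)
definition smooth_pt :: "complex \<Rightarrow> bool" where
  "smooth_pt x \<longleftrightarrow> x \<noteq> 0 \<and> x \<noteq> 1"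

(* A rational section of the tautological bundle O(-1) on P^1, written in the affine chart
   as sigma(t) = (p(t)/q(t)) * (t,1), p,q coprime polynomials. *)
definition sec_val :: "complex poly \<Rightarrow> complex poly \<Rightarrow> complex \<Rightarrow> vec2" where
  "sec_val p q t = smul2 (poly p t / poly q t) (t, 1)"

(* its value at infinity (in the chart s = 1/t, sigma = t*(p/q) * (1,s)), valid when
   degree q = degree p + 1, i.e. when sigma is regular and nonvanishing at infinity *)
definition sec_val_inf :: "complex poly \<Rightarrow> complex poly \<Rightarrow> vec2" where
  "sec_val_inf p q = smul2 (lead_coeff p / lead_coeff q) tautinf"

(* sigma = (p/q)(t,1) has divisor exactly -[x] as a rational section of O(-1):
   i.e. it is a nowhere vanishing regular section of O(-1)(x) = O(-1) \<otimes> O(x). *)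
definition nv_section_twist :: "complex \<Rightarrow> complex poly \<Rightarrow> complex poly \<Rightarrow> bool" where
  "nv_section_twist x p q \<longleftrightarrow>
     q \<noteq> 0 \<and> coprime p q \<and> (\<forall>z. poly p z \<noteq> 0) \<and>
     (\<forall>z. poly q z = 0 \<longleftrightarrow> z = x) \<and> order x q = 1 \<and> degree q = degree p + 1"

(* The line bundle L with gluing data (a,b,c): the fibres of O(-1) over 0,1,infinity are
   identified with a common line by sending a*taut0, b*taut1, c*tautinf to the same vector.
   L(x) \<cong> O_S iff L(x) has a nowhere vanishing global section, i.e. a nowhere vanishing
   section of O(-1)(x) on P^1 whose values at 0,1,infinity are compatible with the gluing. *)
definition twist_trivial :: "vec3 \<Rightarrow> complex \<Rightarrow> bool" where
  "twist_trivial v x \<longleftrightarrow> (case v of (a, b, c) \<Rightarrow>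
     (\<exists>p q m. m \<noteq> 0 \<and> nv_section_twist x p q \<and>
        sec_val p q 0 = smul2 m (smul2 a taut0) \<and>
        sec_val p q 1 = smul2 m (smul2 b taut1) \<and>
        sec_val_inf p q = smul2 m (smul2 c tautinf)))"

(* M_O = (C-{0})^3 modulo scalars, represented by the cone of its representatives in C^3 - {0} *)
definition MO :: "vec3 set" where
  "MO = {(a, b, c). a \<noteq> 0 \<and> b \<noteq> 0 \<and> c \<noteq> 0}"

definition trivializable_locus :: "vec3 set" where
  "trivializable_locus = {v \<in> MO. \<exists>x. smooth_pt x \<and> twist_trivial v x}"

(* closure in P^2 of a cone of representatives: closure in C^3 - {0} *)
definition proj_closure :: "vec3 set \<Rightarrow> vec3 set" where
  "proj_closure A = closure A - {0}"

definition quad_form :: "(nat \<Rightarrow> complex) \<Rightarrow> vec3 \<Rightarrow> complex" where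
  "quad_form q v = (case v of (a, b, c) \<Rightarrow>
     q 0 * a^2 + q 1 * b^2 + q 2 * c^2 + q 3 * a * b + q 4 * b * c + q 5 * a * c)"

end

theory Submission imports Defs "HOL-Computational_Algebra.Fundamental_Theorem_Algebra" begin

lemma nv_const:
  assumes "nv_section_twist x p q"
  shows "degree p = 0" "p \<noteq> 0" "degree q = 1"
proof -
  have np: "\<forall>z. poly p z \<noteq> 0" using assms by (simp add: nv_section_twist_def)
  show "degree p = 0"
  proof (rule ccontr)
    assume "degree p \<noteq> 0"
    then have "\<not> (\<exists>a l. a \<noteq> 0 \<and> l = 0 \<and> p = pCons a l)" by auto
    then show False using fundamental_theorem_of_algebra_alt np by blast
  qed
  then show "degree q = 1" using assms by (simp add: nv_section_twist_def)
  show "p \<noteq> 0" using np by auto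
qed

lemma tt_fwd:
  assumes "smooth_pt x" "twist_trivial (a,b,c) x"
  shows "a*x = -c \<and> b*(1-x) = c"
proof -
  obtain p q m where m: "m \<noteq> 0" and nv: "nv_section_twist x p q" and
    e0: "sec_val p q 0 = smul2 m (smul2 a taut0)" and
    e1: "sec_val p q 1 = smul2 m (smul2 b taut1)" and
    ei: "sec_val_inf p q = smul2 m (smul2 c tautinf)"
    using assms(2) by (auto simp: twist_trivial_def)
  from nv_const[OF nv] obtain c0 where p: "p = [:c0:]" and c0: "c0 \<noteq> 0"
    by (metis degree_eq_zeroE pCons_0_0)
  define q0 where "q0 = coeff q 0"
  define q1 where "q1 = coeff q 1"
  have dq: "degree q = 1" using nv_const[OF nv] by simp
  have q: "q = [:q0, q1:]" unfolding q0_def q1_def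
  proof (rule poly_eqI)
    fix n show "coeff q n = coeff [:coeff q 0, coeff q 1:] n"
      using dq by (cases n) (auto simp: coeff_pCons coeff_eq_0 split: nat.split)
  qed
  have q1: "q1 \<noteq> 0" using dq unfolding q1_def by (metis leading_coeff_0_iff zero_neq_one degree_0)
  have rx: "q0 + q1 * x = 0" using nv q unfolding nv_section_twist_def by (metis poly_pCons poly_0 add_0_right mult_zero_right mult.commute)
  have x0: "x \<noteq> 0" "x \<noteq> 1" using assms(1) by (auto simp: smooth_pt_def)
  have q0: "q0 = - q1 * x" using rx by (simp add: algebra_simps eq_neg_iff_add_eq_0)
  have A: "c0 / q0 = m * a" using e0 p q by (simp add: sec_val_def smul2_def taut0_def)
  have B: "c0 / (q0 + q1) = m * b" using e1 p q by (simp add: sec_val_def smul2_def taut1_def)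
  have C: "c0 / q1 = m * c" using ei p q q1 by (simp add: sec_val_inf_def smul2_def tautinf_def)
  have "q1 * (m * (a * x)) = q1 * (m * (-c))" using A C q0 x0 q1
    by (auto simp: field_simps)
  moreover have "q1 * (m * (b * (1-x))) = q1 * (m * c)" using B C q0 x0 q1
    by (auto simp: field_simps)
  ultimately show ?thesis using m q1 by (metis mult_left_cancel mult_minus_right)
qed

lemma tt_bwd:
  assumes "smooth_pt x" "c \<noteq> 0" "a*x = -c" "b*(1-x) = c"
  shows "twist_trivial (a,b,c) x"
proof -
  have x0: "x \<noteq> 0" "x \<noteq> 1" using assms(1) by (auto simp: smooth_pt_def)
  have ord: "order x [:-x, 1:] = 1" using order_power_n_n[of x 1] by simp
  have cop: "coprime [:c:] [:-x, 1:]"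
    by (rule is_unit_left_imp_coprime) (use assms(2) in \<open>simp add: is_unit_const_poly_iff dvd_field_iff\<close>)
  have nv: "nv_section_twist x [:c:] [:-x, 1:]"
    unfolding nv_section_twist_def using ord cop assms(2) by (auto simp: algebra_simps)
  have a: "a = -c/x" using assms(3) x0 by (auto simp: field_simps)
  have b: "b = c/(1-x)" using assms(4) x0 by (auto simp: field_simps)
  show ?thesis unfolding twist_trivial_def
    apply (simp, rule exI[of _ "[:c:]"], rule exI[of _ "[:-x, 1:]"], rule exI[of _ 1])
    using nv a b by (simp add: sec_val_def sec_val_inf_def smul2_def taut0_def taut1_def tautinf_def)
qed

definition Lset :: "vec3 set" where
  "Lset = {(a,b,c). a \<noteq> 0 \<and> b \<noteq> 0 \<and> c \<noteq> 0 \<and> a*b + b*c = a*c}"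

lemma tt_iff:
  assumes "smooth_pt x" "c \<noteq> 0"
  shows "twist_trivial (a,b,c) x \<longleftrightarrow> a*x = -c \<and> b*(1-x) = c"
  using tt_fwd tt_bwd assms by blast

lemma locus_eq: "trivializable_locus = Lset"
proof (intro set_eqI iffI)
  fix v assume "v \<in> trivializable_locus"
  then obtain a b c x where v: "v = (a,b,c)" and nz: "a \<noteq> 0" "b \<noteq> 0" "c \<noteq> 0"
    and sx: "smooth_pt x" and tt: "twist_trivial (a,b,c) x"
    unfolding trivializable_locus_def MO_def by auto
  from tt_fwd[OF sx tt] have e: "a*x = -c" "b*(1-x) = c" by auto
  have "a*c = a*(b*(1-x))" by (simp add: e)
  also have "... = a*b - b*(a*x)" by (simp add: algebra_simps)
  also have "... = a*b + b*c" using e by simp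
  finally show "v \<in> Lset" using v nz unfolding Lset_def by (auto simp: algebra_simps)
next
  fix v assume "v \<in> Lset"
  then obtain a b c where v: "v = (a,b,c)" and nz: "a \<noteq> 0" "b \<noteq> 0" "c \<noteq> 0"
    and q: "a*b + b*c = a*c" unfolding Lset_def by auto
  define x where "x = -c/a"
  have ac: "a + c \<noteq> 0"
  proof
    assume "a + c = 0" then have "a = -c" by (simp add: eq_neg_iff_add_eq_0)
    then show False using q nz by (auto simp: algebra_simps power2_eq_square)
  qed
  have sx: "smooth_pt x" unfolding smooth_pt_def x_def using nz ac
    by (auto simp: field_simps add_eq_0_iff)
  have e1: "a*x = -c" using nz by (simp add: x_def)
  have e2: "b*(1-x) = c" unfolding x_def using nz q by (auto simp: field_simps)
  show "v \<in> trivializable_locus" unfolding trivializable_locus_def MO_def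
    using v nz sx tt_bwd[OF sx nz(3) e1 e2] by auto
qed

definition qq :: "nat \<Rightarrow> complex" where
  "qq i = (if i = 3 then 1 else if i = 4 then 1 else if i = 5 then -1 else 0)"

lemma qf: "quad_form qq (a,b,c) = a*b + b*c - a*c"
  by (simp add: quad_form_def qq_def)

lemma closedZ: "closed {v. quad_form qq v = 0}"
proof -
  have "{v. quad_form qq v = 0} = {v. fst v * fst (snd v) + fst (snd v) * snd (snd v) - fst v * snd (snd v) = 0}"
    by (auto simp: qf split: prod.splits)
  also have "closed ..."
    by (rule closed_Collect_eq) (intro continuous_intros)+
  finally show ?thesis .
qed

lemma ev01: "eventually (\<lambda>(s::complex). s \<noteq> 0 \<and> s \<noteq> 1 \<and> s \<noteq> -1) (at 0)"
  unfolding eventually_at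
  by (rule exI[of _ 1]) auto

lemma in_cl:
  assumes "isCont f (0::complex)" "\<And>s. s \<noteq> 0 \<Longrightarrow> s \<noteq> 1 \<Longrightarrow> s \<noteq> -1 \<Longrightarrow> f s \<in> Lset"
  shows "f 0 \<in> closure Lset"
proof (rule Lim_in_closed_set[of _ f "at 0"])
  show "closed (closure Lset)" by simp
  show "eventually (\<lambda>x. f x \<in> closure Lset) (at 0)"
    using ev01 by eventually_elim (use assms(2) closure_subset in blast)
  show "at (0::complex) \<noteq> bot" by simp
  show "(f \<longlongrightarrow> f 0) (at 0)" using assms(1) by (simp add: isCont_def)
qed

lemma pt1: assumes "a \<noteq> 0" shows "(a,0,0) \<in> closure Lset"
proof -
  let ?f = "\<lambda>(s::complex). (-a * (s-1), -a * s, -a * (s - s * s))"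
  have "?f 0 \<in> closure Lset"
  proof (rule in_cl)
    show "isCont ?f 0" by (intro continuous_intros)
    fix s :: complex assume s: "s \<noteq> 0" "s \<noteq> 1" "s \<noteq> -1"
    have n1: "-a * (s-1) \<noteq> 0" using s assms by simp
    have n2: "-a * s \<noteq> 0" using s assms by simp
    have "s - s * s = s * (1 - s)" by algebra
    then have n3: "-a * (s - s * s) \<noteq> 0" using s assms by simp
    have eq: "(-a * (s-1)) * (-a * s) + (-a * s) * (-a * (s - s * s)) = (-a * (s-1)) * (-a * (s - s * s))"
      by algebra
    show "?f s \<in> Lset" using n1 n2 n3 eq unfolding Lset_def by simp
  qed
  then show ?thesis by simp
qed

lemma pt2: assumes "b \<noteq> 0" shows "(0,b,0) \<in> closure Lset"
proof -
  let ?f = "\<lambda>(s::complex). (b * s, b * (1+s), b * ((1+s) - (1+s) * (1+s)))"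
  have "?f 0 \<in> closure Lset"
  proof (rule in_cl)
    show "isCont ?f 0" by (intro continuous_intros)
    fix s :: complex assume s: "s \<noteq> 0" "s \<noteq> 1" "s \<noteq> -1"
    have s1: "1 + s \<noteq> 0" using s(3) by (metis add.commute add_eq_0_iff)
    have n1: "b * s \<noteq> 0" using s assms by simp
    have n2: "b * (1+s) \<noteq> 0" using s1 assms by simp
    have "(1+s) - (1+s) * (1+s) = -(s * (1+s))" by algebra
    then have n3: "b * ((1+s) - (1+s) * (1+s)) \<noteq> 0" using s s1 assms by simp
    have eq: "(b * s) * (b * (1+s)) + (b * (1+s)) * (b * ((1+s) - (1+s) * (1+s))) = (b * s) * (b * ((1+s) - (1+s) * (1+s)))"
      by algebra
    show "?f s \<in> Lset" using n1 n2 n3 eq unfolding Lset_def by simp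
  qed
  then show ?thesis by simp
qed

lemma pt3: assumes "c \<noteq> 0" shows "(0,0,c) \<in> closure Lset"
proof -
  let ?f = "\<lambda>(s::complex). (-c * s, c * s / (s-1), c)"
  have "?f 0 \<in> closure Lset"
  proof (rule in_cl)
    show "isCont ?f 0" by (intro continuous_intros) auto
    fix s :: complex assume s: "s \<noteq> 0" "s \<noteq> 1" "s \<noteq> -1"
    then have d: "s - 1 \<noteq> 0" by simp
    have n1: "-c * s \<noteq> 0" using s assms by simp
    have n2: "c * s / (s-1) \<noteq> 0" using s d assms by simp
    have eq: "(-c * s) * (c * s / (s-1)) + (c * s / (s-1)) * c = (-c * s) * c"
    proof -
      have "(-c * s) * (c * s / (s-1)) + (c * s / (s-1)) * c = (c * s / (s-1)) * (-c * (s-1))" by algebra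
      also have "... = (-c * s) * c" using d by simp
      finally show ?thesis .
    qed
    show "?f s \<in> Lset" using n1 n2 eq assms unfolding Lset_def by simp
  qed
  then show ?thesis by simp
qed

lemma closure_eq: "proj_closure Lset = {v. v \<noteq> 0 \<and> quad_form qq v = 0}"
proof (intro set_eqI iffI)
  fix v assume "v \<in> proj_closure Lset"
  then have v: "v \<in> closure Lset" "v \<noteq> 0" by (auto simp: proj_closure_def)
  have "Lset \<subseteq> {v. quad_form qq v = 0}" by (auto simp: Lset_def qf)
  then have "closure Lset \<subseteq> {v. quad_form qq v = 0}"
    using closedZ by (rule closure_minimal)
  then show "v \<in> {v. v \<noteq> 0 \<and> quad_form qq v = 0}" using v by auto
next
  fix v assume "v \<in> {v. v \<noteq> 0 \<and> quad_form qq v = 0}"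
  then obtain a b c where v: "v = (a,b,c)" and nz: "(a,b,c) \<noteq> 0" and e: "a*b + b*c - a*c = 0"
    by (metis (mono_tags) mem_Collect_eq prod_cases3 qf)
  have e': "a*b + b*c = a*c" using e by (simp add: algebra_simps)
  have "(a,b,c) \<in> closure Lset"
  proof (cases "a \<noteq> 0 \<and> b \<noteq> 0 \<and> c \<noteq> 0")
    case True
    then have "(a,b,c) \<in> Lset" using e' by (simp add: Lset_def)
    then show ?thesis using closure_subset by blast
  next
    case False
    then consider "a = 0" | "b = 0" | "c = 0" by blast
    then show ?thesis
    proof cases
      case 1
      then have "b * c = 0" using e' by simp
      then show ?thesis using nz 1 pt2 pt3 by (auto simp: zero_prod_def)
    next
      case 2
      then have "a * c = 0" using e' by simp
      then show ?thesis using nz 2 pt1 pt3 by (auto simp: zero_prod_def)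
    next
      case 3
      then have "a * b = 0" using e' by simp
      then show ?thesis using nz 3 pt1 pt2 by (auto simp: zero_prod_def)
    qed
  qed
  then show "v \<in> proj_closure Lset" using v nz by (simp add: proj_closure_def)
qed

theorem mainTheorem3:
  shows "(\<forall>v \<in> trivializable_locus. \<exists>!x. smooth_pt x \<and> twist_trivial v x) \<and>
    (\<exists>q. (\<exists>i<6. q i \<noteq> 0) \<and>
       proj_closure trivializable_locus = {v. v \<noteq> 0 \<and> quad_form q v = 0} \<and>
       quad_form q (1, 0, 0) = 0 \<and> quad_form q (0, 1, 0) = 0 \<and> quad_form q (0, 0, 1) = 0)"
proof
  show "\<forall>v \<in> trivializable_locus. \<exists>!x. smooth_pt x \<and> twist_trivial v x"
  proof
    fix v assume v: "v \<in> trivializable_locus"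
    then obtain a b c where vv: "v = (a,b,c)" and nz: "a \<noteq> 0" "c \<noteq> 0"
      unfolding trivializable_locus_def MO_def by auto
    obtain x where x: "smooth_pt x \<and> twist_trivial v x"
      using v unfolding trivializable_locus_def by auto
    show "\<exists>!x. smooth_pt x \<and> twist_trivial v x"
    proof (rule ex1I[of _ x])
      show "smooth_pt x \<and> twist_trivial v x" by (rule x)
      fix y assume y: "smooth_pt y \<and> twist_trivial v y"
      have "a*y = -c" "a*x = -c" using tt_fwd y x vv by blast+
      then show "y = x" using nz(1) by (metis mult_left_cancel)
    qed
  qed
  show "\<exists>q. (\<exists>i<6. q i \<noteq> 0) \<and>
       proj_closure trivializable_locus = {v. v \<noteq> 0 \<and> quad_form q v = 0} \<and>
       quad_form q (1, 0, 0) = 0 \<and> quad_form q (0, 1, 0) = 0 \<and> quad_form q (0, 0, 1) = 0"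
    apply (rule exI[of _ qq])
    using closure_eq locus_eq by (auto simp: qf qq_def intro: exI[of _ 3])
qed

end
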